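(* Let $g^{bf}$ be the maximum-entropy element of $P$ and let $V=\min_{z\in P}z\cdot\log z$. For every $\theta^{ref}\in\mathbb{R}^m$, $$d(\eta,g^{bf})\;\le\;-V+\eta\cdot\log\eta\;\le\;d\big(\eta,g^{(\theta^{ref})}\big)+2\,\epsilon\cdot|\theta^{ref}|\;\le\;d\big(\eta,g^{(\theta^{ref})}\big)+2\|\epsilon\|_\infty\|\theta^{ref}\|_1,$$ where $|\theta^{ref}|$ is the entrywise absolute value.
   Context: Standard setup. Let $n\ge1$, $k\ge2$, $p\ge1$ be integers and $m=p+k$. There are $n$ data points $x_1,\dots,x_n$ and $p$ rules $h^{(1)},\dots,h^{(p)}$, each a map from $\{x_1,\dots,x_n\}$ to $\{1,\dots,k\}\cup\{?\}$, where "?" means abstain. Let $n_j\ge1$ be the number of indices $i$ with $h^{(j)}(x_i)\neq ?$. $\Delta_k$ denotes the probability simplex in $\mathbb{R}^k$; an element $z\in\Delta_k^n\subset\mathbb{R}^{nk}$ is written $z=(z_1,\dots,z_n)$ with $z_i=(z_{i1},\dots,z_{ik})\in\Delta_k$. For $j\le p$ let $h^{(j)}\in\{0,1\}^{nk}$ also denote the vector with $h^{(j)}_{i\ell}=1$ iff $h^{(j)}(x_i)=\ell$; for $\ell\le k$ let $\vec e^{\,n}_\ell\in\{0,1\}^{nk}$ have entries $(\vec e^{\,n}_\ell)_{i\ell'}=\mathbf 1(\ell'=\ell)$. The matrix $A\in\mathbb{R}^{m\times nk}$ has rows $a^{(j)}=h^{(j)}/n_j$ for $1\le j\le p$ and $a^{(p+\ell)}=\vec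 e^{\,n}_\ell/n$ for $1\le\ell\le k$. For $\theta\in\mathbb{R}^m$ put $a^{(\theta)}=A^\top\theta\in\mathbb{R}^{nk}$ (entries $a^{(\theta)}_{i\ell}$) and define $g^{(\theta)}\in\Delta_k^n$ by $g^{(\theta)}_{i\ell}=\exp(a^{(\theta)}_{i\ell})/\sum_{\ell'=1}^k\exp(a^{(\theta)}_{i\ell'})$; let $\mathcal G=\{g^{(\theta)}:\theta\in\mathbb{R}^m\}$. A fixed "true labeling" $\eta\in\Delta_k^n$ is given and $b^*:=A\eta\in\mathbb{R}^m$. Given $b\in\mathbb{R}^m$ and $\epsilon\in\mathbb{R}^m$ with $\epsilon\ge0$ and $b-\epsilon\le b^*\le b+\epsilon$ (entrywise), let $P=\{z\in\Delta_k^n:\ b-\epsilon\le Az\le b+\epsilon\}$ (entrywise). Logarithms act entrywise; $z\cdot\log g=\sum_{i,\ell}z_{i\ell}\log g_{i\ell}$ with conventions $0\log 0=0$, $\log 0=-\infty$. The maximum-entropy element of $P$ is the unique minimizer of $z\cdot\log z$ over $P$. For $\mu,\nu\in\Delta_k^n$, $d(\mu,\nu)=\sum_{i=1}^n\mathrm{KL}(\mu_i\|\nu_i)=\sum_{i,\ell}\mu_{i\ell}\log(\mu_{i\ell}/\nu_{i\ell})$, with $0\log(0/x)=0$. *)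

theory Defs
  imports "HOL-Analysis.Analysis" "HOL-Library.Extended_Real"
begin

(* Indexing conventions (0-based): data points i < n, classes l < k,
   rules j < p, rows of A r < m = p + k.  A rule h is a function
   nat \<Rightarrow> nat \<Rightarrow> nat option : h j i = None means abstain,
   h j i = Some l means rule j assigns class l to x_i.
   Elements of R^{nk} are functions z :: nat \<Rightarrow> nat \<Rightarrow> real (z i l),
   elements of R^m are functions nat \<Rightarrow> real. *)

definition simplex_n :: "nat \<Rightarrow> nat \<Rightarrow> (nat \<Rightarrow> nat \<Rightarrow> real) set" where
  "simplex_n n k = {z. \<forall>i<n. (\<forall>l<k. 0 \<le> z i l) \<and> (\<Sum>l<k. z i l) = 1}"

definition n_rule :: "nat \<Rightarrow> (nat \<Rightarrow> nat \<Rightarrow> nat option) \<Rightarrow> nat \<Rightarrow> nat" where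
  "n_rule n h j = card {i. i < n \<and> h j i \<noteq> None}"

definition hvec :: "(nat \<Rightarrow> nat \<Rightarrow> nat option) \<Rightarrow> nat \<Rightarrow> nat \<Rightarrow> nat \<Rightarrow> real" where
  "hvec h j i l = (if h j i = Some l then 1 else 0)"

definition Amat :: "nat \<Rightarrow> nat \<Rightarrow> nat \<Rightarrow> (nat \<Rightarrow> nat \<Rightarrow> nat option) \<Rightarrow> nat \<Rightarrow> nat \<Rightarrow> nat \<Rightarrow> real" where
  "Amat n k p h r i l =
     (if r < p then hvec h r i l / real (n_rule n h r)
      else if l = r - p then 1 / real n else 0)"

definition Aapply :: "nat \<Rightarrow> nat \<Rightarrow> nat \<Rightarrow> (nat \<Rightarrow> nat \<Rightarrow> nat option) \<Rightarrow> (nat \<Rightarrow> nat \<Rightarrow> real) \<Rightarrow> nat \<Rightarrow> real" where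
  "Aapply n k p h z r = (\<Sum>i<n. \<Sum>l<k. Amat n k p h r i l * z i l)"

definition atheta :: "nat \<Rightarrow> nat \<Rightarrow> nat \<Rightarrow> (nat \<Rightarrow> nat \<Rightarrow> nat option) \<Rightarrow> (nat \<Rightarrow> real) \<Rightarrow> nat \<Rightarrow> nat \<Rightarrow> real" where
  "atheta n k p h \<theta> i l = (\<Sum>r<p+k. Amat n k p h r i l * \<theta> r)"

definition gtheta :: "nat \<Rightarrow> nat \<Rightarrow> nat \<Rightarrow> (nat \<Rightarrow> nat \<Rightarrow> nat option) \<Rightarrow> (nat \<Rightarrow> real) \<Rightarrow> nat \<Rightarrow> nat \<Rightarrow> real" where
  "gtheta n k p h \<theta> i l =
     exp (atheta n k p h \<theta> i l) / (\<Sum>l'<k. exp (atheta n k p h \<theta> i l'))"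

definition Ppoly :: "nat \<Rightarrow> nat \<Rightarrow> nat \<Rightarrow> (nat \<Rightarrow> nat \<Rightarrow> nat option) \<Rightarrow> (nat \<Rightarrow> real) \<Rightarrow> (nat \<Rightarrow> real) \<Rightarrow> (nat \<Rightarrow> nat \<Rightarrow> real) set" where
  "Ppoly n k p h b \<epsilon> = {z \<in> simplex_n n k.
      \<forall>r<p+k. b r - \<epsilon> r \<le> Aapply n k p h z r \<and> Aapply n k p h z r \<le> b r + \<epsilon> r}"

(* z \<cdot> log z, with 0 log 0 = 0 (holds since 0 * ln 0 = 0) *)
definition negent :: "nat \<Rightarrow> nat \<Rightarrow> (nat \<Rightarrow> nat \<Rightarrow> real) \<Rightarrow> real" where
  "negent n k z = (\<Sum>i<n. \<Sum>l<k. z i l * ln (z i l))"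

definition is_maxent :: "nat \<Rightarrow> nat \<Rightarrow> (nat \<Rightarrow> nat \<Rightarrow> real) set \<Rightarrow> (nat \<Rightarrow> nat \<Rightarrow> real) \<Rightarrow> bool" where
  "is_maxent n k S g \<longleftrightarrow> g \<in> S \<and> (\<forall>z\<in>S. negent n k g \<le> negent n k z)"

definition kl_term :: "real \<Rightarrow> real \<Rightarrow> ereal" where
  "kl_term a c = (if a = 0 then 0 else if c = 0 then \<infinity> else ereal (a * ln (a / c)))"

definition dKL :: "nat \<Rightarrow> nat \<Rightarrow> (nat \<Rightarrow> nat \<Rightarrow> real) \<Rightarrow> (nat \<Rightarrow> nat \<Rightarrow> real) \<Rightarrow> ereal" where
  "dKL n k \<mu> \<nu> = (\<Sum>i<n. \<Sum>l<k. kl_term (\<mu> i l) (\<nu> i l))"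

end

theory Submission
  imports Defs
begin

lemma key_ineq: fixes x z :: real assumes "0 \<le> x" "0 < z"
  shows "x - z \<le> x * ln x - x * ln z"
proof (cases "x = 0")
  case True then show ?thesis using assms by simp
next
  case False
  then have xp: "x > 0" using assms by simp
  have "ln (z/x) \<le> z/x - 1" using ln_le_minus_one xp assms by simp
  then have "x * ln (z/x) \<le> x * (z/x - 1)" using xp by (simp add: mult_left_mono)
  moreover have "ln (z/x) = ln z - ln x" using xp assms ln_div by simp
  moreover have "x * (z/x - 1) = z - x" using xp by (simp add: field_simps)
  ultimately show ?thesis by (simp add: algebra_simps)
qed

lemma term_conv: fixes x y t :: real
  assumes "0 \<le> x" "0 \<le> y" "0 < t" "t < 1"
  shows "(x + t*(y-x)) * ln (x + t*(y-x)) - x * ln x \<le> t*(y-x)*ln (x + t*(y-x)) + t*(y-x)"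
proof (cases "x = 0 \<and> y = 0")
  case True then show ?thesis by simp
next
  case False
  have "x + t*(y-x) = (1-t)*x + t*y" by (simp add: algebra_simps)
  moreover have "(1-t)*x + t*y > 0"
  proof -
    have a: "(1-t)*x \<ge> 0" "t*y \<ge> 0" using assms by auto
    have "(1-t)*x > 0 \<or> t*y > 0" using False assms by auto
    then show ?thesis using a by linarith
  qed
  ultimately have zp: "x + t*(y-x) > 0" by simp
  from key_ineq[OF assms(1) zp] show ?thesis by (simp add: algebra_simps)
qed

definition zt :: "(nat \<Rightarrow> nat \<Rightarrow> real) \<Rightarrow> (nat \<Rightarrow> nat \<Rightarrow> real) \<Rightarrow> real \<Rightarrow> nat \<Rightarrow> nat \<Rightarrow> real" where
  "zt g e t i l = g i l + t * (e i l - g i l)"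

definition Dfun :: "nat \<Rightarrow> nat \<Rightarrow> (nat \<Rightarrow> nat \<Rightarrow> real) \<Rightarrow> (nat \<Rightarrow> nat \<Rightarrow> real) \<Rightarrow> real \<Rightarrow> real" where
  "Dfun n k g e t = (\<Sum>i<n. \<Sum>l<k. (e i l - g i l) * ln (zt g e t i l))"

lemma rowdiff_zero:
  assumes "g \<in> simplex_n n k" "e \<in> simplex_n n k"
  shows "(\<Sum>i<n. \<Sum>l<k. c * (e i l - g i l)) = 0"
proof -
  have "\<And>i. i < n \<Longrightarrow> (\<Sum>l<k. c * (e i l - g i l)) = 0"
    using assms by (simp add: simplex_n_def sum_subtractf flip: sum_distrib_left)
  then show ?thesis by simp
qed

lemma D_nonneg:
  assumes g: "g \<in> simplex_n n k" and e: "e \<in> simplex_n n k"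
    and min: "negent n k g \<le> negent n k (zt g e t)"
    and t: "0 < t" "t < 1"
  shows "0 \<le> Dfun n k g e t"
proof -
  have "negent n k (zt g e t) - negent n k g
      = (\<Sum>i<n. \<Sum>l<k. zt g e t i l * ln (zt g e t i l) - g i l * ln (g i l))"
    by (simp add: negent_def sum_subtractf)
  also have "\<dots> \<le> (\<Sum>i<n. \<Sum>l<k. t*(e i l - g i l)*ln (zt g e t i l) + t*(e i l - g i l))"
  proof (intro sum_mono)
    fix i l assume "i \<in> {..<n}" "l \<in> {..<k}"
    then have "0 \<le> g i l" "0 \<le> e i l" using g e by (auto simp: simplex_n_def)
    from term_conv[OF this t] show "zt g e t i l * ln (zt g e t i l) - g i l * ln (g i l)
       \<le> t*(e i l - g i l)*ln (zt g e t i l) + t*(e i l - g i l)" by (simp add: zt_def)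
  qed
  also have "\<dots> = t * Dfun n k g e t + (\<Sum>i<n. \<Sum>l<k. t * (e i l - g i l))"
    by (simp add: Dfun_def sum.distrib sum_distrib_left mult.assoc)
  also have "\<dots> = t * Dfun n k g e t" using rowdiff_zero[OF g e] by simp
  finally have "0 \<le> t * Dfun n k g e t" using min by simp
  then show ?thesis using t by (simp add: zero_le_mult_iff)
qed


lemma term_mono: fixes x y t s :: real
  assumes "0 \<le> x" "0 \<le> y" "0 < t" "t \<le> s" "s < 1"
  shows "(y-x) * ln (x + t*(y-x)) \<le> (y-x) * ln (x + s*(y-x))"
proof (cases "x = 0 \<and> y = 0")
  case True then show ?thesis by simp
next
  case False
  have pos: "x + u*(y-x) > 0" if "0 < u" "u < 1" for u
  proof -
    have "x + u*(y-x) = (1-u)*x + u*y" by (simp add: algebra_simps)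
    moreover have a: "(1-u)*x \<ge> 0" "u*y \<ge> 0" using assms that by auto
    moreover have "(1-u)*x > 0 \<or> u*y > 0" using False assms that by auto
    ultimately show ?thesis by linarith
  qed
  have zt: "x + t*(y-x) > 0" using pos assms by auto
  have zs: "x + s*(y-x) > 0" using pos assms by auto
  show ?thesis
  proof (cases "y \<ge> x")
    case True
    then have "x + t*(y-x) \<le> x + s*(y-x)" using assms by (simp add: mult_right_mono)
    then have "ln (x + t*(y-x)) \<le> ln (x + s*(y-x))" using zt zs by simp
    then show ?thesis using True by (simp add: mult_left_mono)
  next
    case False
    then have "x + t*(y-x) \<ge> x + s*(y-x)" using assms
      by (simp add: mult_right_mono_neg)
    then have "ln (x + t*(y-x)) \<ge> ln (x + s*(y-x))" using zt zs by simp
    then show ?thesis using False by (simp add: mult_left_mono_neg)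
  qed
qed

lemma sum_le_member_nonpos:
  fixes f :: "'a \<Rightarrow> real"
  assumes "finite A" "a \<in> A" "\<And>x. x \<in> A \<Longrightarrow> f x \<le> 0"
  shows "sum f A \<le> f a"
proof -
  have "sum f A = f a + sum f (A - {a})" using assms sum.remove by metis
  moreover have "sum f (A - {a}) \<le> 0" using assms by (intro sum_nonpos) auto
  ultimately show ?thesis by simp
qed

lemma positivity:
  assumes g: "g \<in> simplex_n n k" and e: "e \<in> simplex_n n k"
    and D: "\<And>t. 0 < t \<Longrightarrow> t < 1 \<Longrightarrow> 0 \<le> Dfun n k g e t"
    and il: "i < n" "l < k" and E: "e i l > 0"
  shows "g i l > 0"
proof (rule ccontr)
  assume "\<not> g i l > 0"
  moreover have "g i l \<ge> 0" using g il by (auto simp: simplex_n_def)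
  ultimately have g0: "g i l = 0" by simp
  define E where "E = e i l"
  define D0 where "D0 = Dfun n k g e (1/2)"
  have D0: "D0 \<ge> 0" using D[of "1/2"] D0_def by simp
  define t where "t = exp (- D0/E - 1) / 2"
  have tpos: "t > 0" by (simp add: t_def)
  have "D0/E \<ge> 0" using D0 E E_def by simp
  then have "exp (- D0/E - 1) \<le> exp 0" by simp
  then have th: "t \<le> 1/2" by (simp add: t_def)
  define T where "T = (\<lambda>u (i,l). (e i l - g i l) * ln (zt g e u i l))"
  have Dsum: "Dfun n k g e u = (\<Sum>x\<in>{..<n}\<times>{..<k}. T u x)" for u
    by (simp add: Dfun_def T_def sum.cartesian_product)
  have "Dfun n k g e t - D0 = (\<Sum>x\<in>{..<n}\<times>{..<k}. T t x - T (1/2) x)"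
    by (simp add: Dsum D0_def sum_subtractf)
  also have "\<dots> \<le> T t (i,l) - T (1/2) (i,l)"
  proof (rule sum_le_member_nonpos)
    show "(i,l) \<in> {..<n}\<times>{..<k}" using il by simp
    fix x assume "x \<in> {..<n}\<times>{..<k}"
    then obtain a b where x: "x = (a,b)" "a < n" "b < k" by auto
    then have "0 \<le> g a b" "0 \<le> e a b" using g e by (auto simp: simplex_n_def)
    from term_mono[OF this tpos th] show "T t x - T (1/2) x \<le> 0"
      by (simp add: x T_def zt_def)
  qed auto
  also have "T t (i,l) = E * ln (t*E)" by (simp add: T_def zt_def g0 E_def mult.commute)
  also have "T (1/2) (i,l) = E * ln (E/2)" by (simp add: T_def zt_def g0 E_def)
  also have "ln (t*E) = ln (E/2) - D0/E - 1"
  proof -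
    have eq: "t*E = (E/2) * exp (- D0/E - 1)" by (simp add: t_def)
     have "E/2 > 0" using E E_def by simp
    then have "ln (t*E) = ln (E/2) + ln (exp (- D0/E - 1))"
      unfolding eq by (intro ln_mult_pos) auto
    then show ?thesis by simp
  qed
  finally have "Dfun n k g e t \<le> D0 + E * (ln (E/2) - D0/E - 1) - E * ln (E/2)" by simp
  also have "\<dots> = - E" using E E_def by (simp add: field_simps)
  finally have "Dfun n k g e t < 0" using E E_def by simp
  moreover have "t < 1" using th by simp
  ultimately show False using D[OF tpos] by simp
qed

lemma limit_nonneg:
  assumes g: "g \<in> simplex_n n k" and e: "e \<in> simplex_n n k"
    and D: "\<And>t. 0 < t \<Longrightarrow> t < 1 \<Longrightarrow> 0 \<le> Dfun n k g e t"
    and pos: "\<And>i l. i < n \<Longrightarrow> l < k \<Longrightarrow> e i l > 0 \<Longrightarrow> g i l > 0"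
  shows "0 \<le> (\<Sum>i<n. \<Sum>l<k. (e i l - g i l) * ln (g i l))"
proof -
  have lim: "((\<lambda>t. Dfun n k g e t) \<longlongrightarrow> (\<Sum>i<n. \<Sum>l<k. (e i l - g i l) * ln (g i l))) (at_right 0)"
    unfolding Dfun_def
  proof (intro tendsto_sum)
    fix i l assume il: "i \<in> {..<n}" "l \<in> {..<k}"
    show "((\<lambda>t. (e i l - g i l) * ln (zt g e t i l)) \<longlongrightarrow> (e i l - g i l) * ln (g i l)) (at_right 0)"
    proof (cases "g i l = 0")
      case True
      moreover have "e i l \<ge> 0" using e il by (auto simp: simplex_n_def)
      ultimately have "e i l = 0" using pos il by force
      then show ?thesis using True by simp
    next
      case False
      have "((\<lambda>t. zt g e t i l) \<longlongrightarrow> g i l + 0 * (e i l - g i l)) (at_right 0)"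
        unfolding zt_def by (intro tendsto_intros)
      then have "((\<lambda>t. ln (zt g e t i l)) \<longlongrightarrow> ln (g i l)) (at_right 0)"
        using False by (intro tendsto_ln) auto
      then show ?thesis by (rule tendsto_mult_left)
    qed
  qed
  have ev: "eventually (\<lambda>t. 0 \<le> Dfun n k g e t) (at_right (0::real))"
    using eventually_at_right_real[of 0 1] by (rule eventually_mono) (auto intro: D)
  show ?thesis using tendsto_lowerbound[OF lim ev] by simp
qed


lemma convex_bound: fixes lo a c t :: real
  assumes "lo \<le> a" "lo \<le> c" "a \<le> hi" "c \<le> hi" "0 \<le> t" "t \<le> 1"
  shows "lo \<le> a + t*(c-a) \<and> a + t*(c-a) \<le> hi"
proof -
  have eq: "a + t*(c-a) = (1-t)*a + t*c" by (simp add: algebra_simps)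
  have "(1-t)*lo \<le> (1-t)*a" "t*lo \<le> t*c" "(1-t)*a \<le> (1-t)*hi" "t*c \<le> t*hi"
    using assms by (auto intro: mult_left_mono)
  then show ?thesis unfolding eq by (simp add: algebra_simps)
qed

lemma Aapply_zt: "Aapply n k p h (zt g e t) r = Aapply n k p h g r + t*(Aapply n k p h e r - Aapply n k p h g r)"
  unfolding Aapply_def zt_def
  by (simp add: algebra_simps sum.distrib sum_subtractf sum_distrib_left)

lemma zt_in_P:
  assumes "g \<in> Ppoly n k p h b \<epsilon>" "e \<in> Ppoly n k p h b \<epsilon>" "0 \<le> t" "t \<le> 1"
  shows "zt g e t \<in> Ppoly n k p h b \<epsilon>"
proof -
  have gs: "g \<in> simplex_n n k" and es: "e \<in> simplex_n n k" using assms by (auto simp: Ppoly_def)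
  have "zt g e t \<in> simplex_n n k"
    unfolding simplex_n_def
  proof (intro CollectI allI impI)
    fix i assume i: "i < n"
    have A: "\<forall>l<k. 0 \<le> zt g e t i l"
    proof (intro allI impI)
      fix l assume "l < k"
      then have "0 \<le> g i l" "0 \<le> e i l" using gs es i by (auto simp: simplex_n_def)
      then show "0 \<le> zt g e t i l" unfolding zt_def
        using convex_bound[of 0 "g i l" "e i l" "max (g i l) (e i l)" t] assms by auto
    qed
    have "(\<Sum>l<k. zt g e t i l) = (\<Sum>l<k. g i l) + t * ((\<Sum>l<k. e i l) - (\<Sum>l<k. g i l))"
      unfolding zt_def by (simp add: sum.distrib sum_subtractf flip: sum_distrib_left)
    then have "(\<Sum>l<k. zt g e t i l) = 1" using gs es i by (simp add: simplex_n_def)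
    with A show "(\<forall>l<k. 0 \<le> zt g e t i l) \<and> (\<Sum>l<k. zt g e t i l) = 1" by simp
  qed
  moreover have "\<forall>r<p+k. b r - \<epsilon> r \<le> Aapply n k p h (zt g e t) r \<and> Aapply n k p h (zt g e t) r \<le> b r + \<epsilon> r"
  proof (intro allI impI)
    fix r assume r: "r < p+k"
    have "b r - \<epsilon> r \<le> Aapply n k p h g r \<and> Aapply n k p h g r \<le> b r + \<epsilon> r"
      "b r - \<epsilon> r \<le> Aapply n k p h e r \<and> Aapply n k p h e r \<le> b r + \<epsilon> r"
      using assms r by (auto simp: Ppoly_def)
    then show "b r - \<epsilon> r \<le> Aapply n k p h (zt g e t) r \<and> Aapply n k p h (zt g e t) r \<le> b r + \<epsilon> r"
      unfolding Aapply_zt using convex_bound assms(3,4) by blast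
  qed
  ultimately show ?thesis by (simp add: Ppoly_def)
qed

lemma dKL_finite:
  assumes "\<And>i l. i < n \<Longrightarrow> l < k \<Longrightarrow> 0 \<le> e i l"
    and "\<And>i l. i < n \<Longrightarrow> l < k \<Longrightarrow> e i l > 0 \<Longrightarrow> g i l > 0"
  shows "dKL n k e g = ereal (\<Sum>i<n. \<Sum>l<k. e i l * ln (e i l) - e i l * ln (g i l))"
proof -
  have "kl_term (e i l) (g i l) = ereal (e i l * ln (e i l) - e i l * ln (g i l))"
    if "i < n" "l < k" for i l
  proof (cases "e i l = 0")
    case True then show ?thesis by (simp add: kl_term_def)
  next
    case False
    then have "e i l > 0" "g i l > 0" using assms that by (auto simp: order_le_less)
    then show ?thesis by (simp add: kl_term_def ln_div algebra_simps)
  qed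
  then show ?thesis by (simp add: dKL_def)
qed

lemma loglinear:
  assumes z: "z \<in> simplex_n n k" and k: "k \<ge> 1"
  shows "(\<Sum>i<n. \<Sum>l<k. z i l * ln (gtheta n k p h \<theta> i l))
     = (\<Sum>r<p+k. \<theta> r * Aapply n k p h z r) - (\<Sum>i<n. ln (\<Sum>l'<k. exp (atheta n k p h \<theta> i l')))"
proof -
  define Z where "Z i = (\<Sum>l'<k. exp (atheta n k p h \<theta> i l'))" for i
  have swap3: "(\<Sum>i<n. \<Sum>l<k. \<Sum>r<q. F r i l) = (\<Sum>r<q. \<Sum>i<n. \<Sum>l<k. F r i l)"
    for q and F :: "nat \<Rightarrow> nat \<Rightarrow> nat \<Rightarrow> real"
  proof -
    have "(\<Sum>i<n. \<Sum>l<k. \<Sum>r<q. F r i l) = (\<Sum>i<n. \<Sum>r<q. \<Sum>l<k. F r i l)"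
      by (rule sum.cong[OF refl], rule sum.swap)
    also have "\<dots> = (\<Sum>r<q. \<Sum>i<n. \<Sum>l<k. F r i l)" by (rule sum.swap)
    finally show ?thesis .
  qed
  have Zp: "Z i > 0" for i unfolding Z_def using k by (intro sum_pos) (auto simp: lessThan_empty_iff)
  have lg: "ln (gtheta n k p h \<theta> i l) = atheta n k p h \<theta> i l - ln (Z i)" for i l
    using Zp[of i] by (simp add: gtheta_def Z_def[symmetric] ln_div)
  have "(\<Sum>i<n. \<Sum>l<k. z i l * ln (gtheta n k p h \<theta> i l))
      = (\<Sum>i<n. \<Sum>l<k. z i l * atheta n k p h \<theta> i l) - (\<Sum>i<n. ln (Z i) * (\<Sum>l<k. z i l))"
    by (simp add: lg algebra_simps sum_subtractf sum_distrib_left sum_distrib_right)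
  also have "(\<Sum>i<n. ln (Z i) * (\<Sum>l<k. z i l)) = (\<Sum>i<n. ln (Z i))"
    using z by (simp add: simplex_n_def)
  also have "(\<Sum>i<n. \<Sum>l<k. z i l * atheta n k p h \<theta> i l) = (\<Sum>r<p+k. \<theta> r * Aapply n k p h z r)"
    unfolding atheta_def Aapply_def
    by (simp add: sum_distrib_left sum_distrib_right algebra_simps swap3)
  finally show ?thesis by (simp add: Z_def)
qed

theorem mainTheorem8:
  fixes n k p :: nat
    and h :: "nat \<Rightarrow> nat \<Rightarrow> nat option"
    and \<eta> gbf :: "nat \<Rightarrow> nat \<Rightarrow> real"
    and b \<epsilon> \<theta>ref :: "nat \<Rightarrow> real"
  assumes hn: "n \<ge> 1" and hk: "k \<ge> 2" and hp: "p \<ge> 1"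
    and hrange: "\<And>j i l. j < p \<Longrightarrow> i < n \<Longrightarrow> h j i = Some l \<Longrightarrow> l < k"
    and hnj: "\<And>j. j < p \<Longrightarrow> n_rule n h j \<ge> 1"
    and heta: "\<eta> \<in> simplex_n n k"
    and heps: "\<And>r. r < p + k \<Longrightarrow> \<epsilon> r \<ge> 0"
    and hb: "\<And>r. r < p + k \<Longrightarrow>
               b r - \<epsilon> r \<le> Aapply n k p h \<eta> r \<and> Aapply n k p h \<eta> r \<le> b r + \<epsilon> r"
    and hgbf: "is_maxent n k (Ppoly n k p h b \<epsilon>) gbf"
  shows "let V = (INF z\<in>Ppoly n k p h b \<epsilon>. negent n k z);
             gref = gtheta n k p h \<theta>ref
         in dKL n k \<eta> gbf \<le> ereal (- V + negent n k \<eta>)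
          \<and> ereal (- V + negent n k \<eta>)
              \<le> dKL n k \<eta> gref + ereal (2 * (\<Sum>r<p+k. \<epsilon> r * \<bar>\<theta>ref r\<bar>))
          \<and> dKL n k \<eta> gref + ereal (2 * (\<Sum>r<p+k. \<epsilon> r * \<bar>\<theta>ref r\<bar>))
              \<le> dKL n k \<eta> gref
                 + ereal (2 * Max ((\<lambda>r. \<bar>\<epsilon> r\<bar>) ` {..<p+k}) * (\<Sum>r<p+k. \<bar>\<theta>ref r\<bar>))"
proof -
  define P where "P = Ppoly n k p h b \<epsilon>"
  have etaP: "\<eta> \<in> P" using heta hb by (simp add: P_def Ppoly_def)
  have gP: "gbf \<in> P" and gmin: "\<And>z. z \<in> P \<Longrightarrow> negent n k gbf \<le> negent n k z"
    using hgbf by (auto simp: is_maxent_def P_def)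
  have gs: "gbf \<in> simplex_n n k" using gP by (simp add: P_def Ppoly_def)
  have V: "(INF z\<in>P. negent n k z) = negent n k gbf"
    using gP gmin by (intro cInf_eq_minimum) auto
  have eta0: "\<And>i l. i < n \<Longrightarrow> l < k \<Longrightarrow> 0 \<le> \<eta> i l" using heta by (auto simp: simplex_n_def)
  have Dn: "0 \<le> Dfun n k gbf \<eta> t" if "0 < t" "t < 1" for t
  proof -
    have "zt gbf \<eta> t \<in> P" using zt_in_P[of gbf n k p h b \<epsilon> \<eta> t] that gP etaP
      by (simp add: P_def)
    from D_nonneg[OF gs heta gmin[OF this] that] show ?thesis .
  qed
  have pos: "\<And>i l. i < n \<Longrightarrow> l < k \<Longrightarrow> \<eta> i l > 0 \<Longrightarrow> gbf i l > 0"
    using positivity[OF gs heta Dn] by blast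
  have S: "0 \<le> (\<Sum>i<n. \<Sum>l<k. (\<eta> i l - gbf i l) * ln (gbf i l))"
    using limit_nonneg[OF gs heta Dn pos] by blast
  have d1: "dKL n k \<eta> gbf = ereal (\<Sum>i<n. \<Sum>l<k. \<eta> i l * ln (\<eta> i l) - \<eta> i l * ln (gbf i l))"
    by (rule dKL_finite) (auto intro: eta0 pos)
  have part1: "dKL n k \<eta> gbf \<le> ereal (- negent n k gbf + negent n k \<eta>)"
    unfolding d1 using S
    by (simp add: negent_def sum_subtractf algebra_simps)
  define gref where "gref = gtheta n k p h \<theta>ref"
  have k1: "k \<ge> 1" using hk by simp
  have grefpos: "gref i l > 0" if "l < k" for i l
  proof -
    have "(\<Sum>l'<k. exp (atheta n k p h \<theta>ref i l')) > 0" using k1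
      by (intro sum_pos) (auto simp: lessThan_empty_iff)
    then show ?thesis by (simp add: gref_def gtheta_def)
  qed
  have d2: "dKL n k \<eta> gref = ereal (\<Sum>i<n. \<Sum>l<k. \<eta> i l * ln (\<eta> i l) - \<eta> i l * ln (gref i l))"
    by (rule dKL_finite) (auto intro: eta0 grefpos)
  define S2 where "S2 = (\<Sum>r<p+k. \<epsilon> r * \<bar>\<theta>ref r\<bar>)"
  have gibbs: "(\<Sum>i<n. \<Sum>l<k. gbf i l * ln (gref i l)) \<le> negent n k gbf"
  proof -
    have "(\<Sum>i<n. \<Sum>l<k. gbf i l - gref i l) \<le> (\<Sum>i<n. \<Sum>l<k. gbf i l * ln (gbf i l) - gbf i l * ln (gref i l))"
      using key_ineq gs grefpos by (intro sum_mono) (auto simp: simplex_n_def)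
    moreover have "(\<Sum>i<n. \<Sum>l<k. gbf i l - gref i l) = 0"
    proof -
      have "(\<Sum>l<k. gref i l) = 1" for i
      proof -
        have "(\<Sum>l'<k. exp (atheta n k p h \<theta>ref i l')) > 0" using k1
          by (intro sum_pos) (auto simp: lessThan_empty_iff)
        then show ?thesis by (simp add: gref_def gtheta_def flip: sum_divide_distrib)
      qed
      then show ?thesis using gs by (simp add: sum_subtractf simplex_n_def)
    qed
    ultimately show ?thesis by (simp add: negent_def sum_subtractf)
  qed
  have ll: "(\<Sum>i<n. \<Sum>l<k. \<eta> i l * ln (gref i l)) - (\<Sum>i<n. \<Sum>l<k. gbf i l * ln (gref i l))
      = (\<Sum>r<p+k. \<theta>ref r * (Aapply n k p h \<eta> r - Aapply n k p h gbf r))"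
    unfolding gref_def loglinear[OF heta k1] loglinear[OF gs k1]
    by (simp add: algebra_simps sum_subtractf)
  have "(\<Sum>r<p+k. \<theta>ref r * (Aapply n k p h \<eta> r - Aapply n k p h gbf r)) \<le> (\<Sum>r<p+k. 2 * (\<epsilon> r * \<bar>\<theta>ref r\<bar>))"
  proof (intro sum_mono)
    fix r assume r: "r \<in> {..<p+k}"
    have "b r - \<epsilon> r \<le> Aapply n k p h gbf r \<and> Aapply n k p h gbf r \<le> b r + \<epsilon> r"
      using gP r by (auto simp: P_def Ppoly_def)
    moreover have "b r - \<epsilon> r \<le> Aapply n k p h \<eta> r \<and> Aapply n k p h \<eta> r \<le> b r + \<epsilon> r"
      using hb r by auto
    ultimately have "\<bar>Aapply n k p h \<eta> r - Aapply n k p h gbf r\<bar> \<le> 2 * \<epsilon> r" by linarith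
    then have "\<bar>\<theta>ref r\<bar> * \<bar>Aapply n k p h \<eta> r - Aapply n k p h gbf r\<bar> \<le> \<bar>\<theta>ref r\<bar> * (2 * \<epsilon> r)"
      by (simp add: mult_left_mono)
    then have "\<bar>\<theta>ref r * (Aapply n k p h \<eta> r - Aapply n k p h gbf r)\<bar> \<le> 2 * (\<epsilon> r * \<bar>\<theta>ref r\<bar>)"
      by (simp only: abs_mult) (simp add: algebra_simps)
    then show "\<theta>ref r * (Aapply n k p h \<eta> r - Aapply n k p h gbf r) \<le> 2 * (\<epsilon> r * \<bar>\<theta>ref r\<bar>)"
      by linarith
  qed
  then have bnd: "(\<Sum>i<n. \<Sum>l<k. \<eta> i l * ln (gref i l)) - negent n k gbf \<le> 2 * S2"
    using ll gibbs by (simp add: S2_def sum_distrib_left)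
  have part2: "ereal (- negent n k gbf + negent n k \<eta>) \<le> dKL n k \<eta> gref + ereal (2 * S2)"
    unfolding d2 using bnd by (simp add: negent_def sum_subtractf)
  define M where "M = Max ((\<lambda>r. \<bar>\<epsilon> r\<bar>) ` {..<p+k})"
  have "S2 \<le> (\<Sum>r<p+k. M * \<bar>\<theta>ref r\<bar>)"
    unfolding S2_def
  proof (intro sum_mono)
    fix r assume r: "r \<in> {..<p+k}"
    have "\<epsilon> r \<le> M" unfolding M_def using heps r
      by (intro Max_ge_iff[THEN iffD2]) auto
    then show "\<epsilon> r * \<bar>\<theta>ref r\<bar> \<le> M * \<bar>\<theta>ref r\<bar>" by (simp add: mult_right_mono)
  qed
  then have part3: "2 * S2 \<le> 2 * M * (\<Sum>r<p+k. \<bar>\<theta>ref r\<bar>)"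
    by (simp add: mult.assoc flip: sum_distrib_left)
  show ?thesis
    unfolding Let_def P_def[symmetric] V gref_def[symmetric] S2_def[symmetric] M_def[symmetric]
    using part1 part2 part3 d2 by simp
qed

end
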